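(* Let $A$ be a finite set, $X=A^{\mathbb N}$ with the left shift $\sigma$, and $\phi\in C(X)$. For $n\ge1$ define $\phi^{(n)}:A^n\to\mathbb R$ by $\phi^{(n)}(a_0\dots a_{n-1})=\phi(a_0\dots a_{n-1}a_0\dots a_{n-1}a_0\dots)$ (the periodic sequence with period word $a_0\dots a_{n-1}$), and $U_n:A^n\to\mathbb R$ by $U_n(a_0\dots a_{n-1})=\sum_{i=0}^{n-1}\phi^{(n)}(a_ia_{i+1}\dots a_{i+n-1})$, indices taken modulo $n$. Let $\mu_n$ be the probability distribution on $A^n$ maximising $H(\mu)+\langle U_n,\mu\rangle$ over all probability distributions $\mu$ on $A^n$ (namely $\mu_n(w)=e^{U_n(w)}/\sum_{w'\in A^n}e^{U_n(w')}$), regarded as a Borel probability measure on $X$ by identifying each word $w\in A^n$ with the periodic sequence $www\dots$. Then every weak limit point $\mu$ of $(\mu_n)_{n\ge1}$ is an equilibrium state for $\phi$, i.e. $\mu$ is $\sigma$-invariant and $h(\mu)+\langle\phi,\mu\rangle=\sup\{h(\nu)+\langle\phi,\nu\rangle:\nu\in\mathcal M_\sigma(X)\}$.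
   Context: $X=A^{\mathbb N}$ has the product topology (metric $d(\underline{x},\underline{y})=2^{-\min\{k:x_k\neq y_k\}}$); $C(X)$ is the space of continuous real functions on $X$. For a probability distribution $\mu$ on a finite set $Y$, $H(\mu)=-\sum_{y}\mu(y)\log\mu(y)$ and $\langle U,\mu\rangle=\sum_y\mu(y)U(y)$. $\mathcal M_\sigma(X)$ is the set of $\sigma$-invariant Borel probability measures on $X$, with the weak topology. For $\nu\in\mathcal M_\sigma(X)$, $H_n(\nu)=-\sum_{a_0,\dots,a_{n-1}}\nu[a_0\dots a_{n-1}]\log\nu[a_0\dots a_{n-1}]$ (cylinder probabilities, $0\log0=0$) and $h(\nu)=\lim_n\frac1nH_n(\nu)$; $\langle\phi,\nu\rangle=\int\phi\,d\nu$. *)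

theory Defs
  imports "HOL-Analysis.Analysis" "HOL-Probability.Probability"
begin

text \<open>The full shift X = A^N is the type nat => 'a with 'a finite and discrete;
  its topology is the product topology (Function_Topology), Borel sets are borel.\<close>

definition shift :: "(nat \<Rightarrow> 'a) \<Rightarrow> (nat \<Rightarrow> 'a)" where
  "shift x = (\<lambda>i. x (Suc i))"

definition periodic_pt :: "'a list \<Rightarrow> (nat \<Rightarrow> 'a)" where
  "periodic_pt w = (\<lambda>i. w ! (i mod length w))"

definition phi_word :: "((nat \<Rightarrow> 'a) \<Rightarrow> real) \<Rightarrow> 'a list \<Rightarrow> real" where
  "phi_word \<phi> w = \<phi> (periodic_pt w)"

definition U_word :: "((nat \<Rightarrow> 'a) \<Rightarrow> real) \<Rightarrow> 'a list \<Rightarrow> real" where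
  "U_word \<phi> w = (\<Sum>i<length w. phi_word \<phi> (rotate i w))"

definition words :: "nat \<Rightarrow> 'a list set" where
  "words n = {w. length w = n}"

definition partition_fn :: "((nat \<Rightarrow> 'a) \<Rightarrow> real) \<Rightarrow> nat \<Rightarrow> real" where
  "partition_fn \<phi> n = (\<Sum>w\<in>words n. exp (U_word \<phi> w))"

definition mu_n :: "((nat \<Rightarrow> 'a::topological_space) \<Rightarrow> real) \<Rightarrow> nat \<Rightarrow> (nat \<Rightarrow> 'a) measure" where
  "mu_n \<phi> n = measure_of UNIV (sets borel)
     (\<lambda>B. ennreal (\<Sum>w\<in>{w\<in>words n. periodic_pt w \<in> B}. exp (U_word \<phi> w) / partition_fn \<phi> n))"

definition borel_prob :: "(nat \<Rightarrow> 'a::topological_space) measure \<Rightarrow> bool" where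
  "borel_prob \<nu> \<longleftrightarrow> prob_space \<nu> \<and> sets \<nu> = sets borel"

definition invariant_measures :: "(nat \<Rightarrow> 'a::topological_space) measure set" where
  "invariant_measures = {\<nu>. borel_prob \<nu> \<and> distr \<nu> borel shift = \<nu>}"

definition cylinder :: "'a list \<Rightarrow> (nat \<Rightarrow> 'a) set" where
  "cylinder w = {x. \<forall>i<length w. x i = w ! i}"

definition block_entropy :: "(nat \<Rightarrow> 'a::topological_space) measure \<Rightarrow> nat \<Rightarrow> real" where
  "block_entropy \<nu> n = - (\<Sum>w\<in>words n. measure \<nu> (cylinder w) * ln (measure \<nu> (cylinder w)))"

definition ks_entropy :: "(nat \<Rightarrow> 'a::topological_space) measure \<Rightarrow> real" where
  "ks_entropy \<nu> = lim (\<lambda>n. block_entropy \<nu> n / real n)"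

definition weak_conv :: "(nat \<Rightarrow> (nat \<Rightarrow> 'a::topological_space) measure) \<Rightarrow> (nat \<Rightarrow> 'a) measure \<Rightarrow> bool" where
  "weak_conv M \<mu> \<longleftrightarrow> (\<forall>f :: (nat \<Rightarrow> 'a) \<Rightarrow> real. continuous_on UNIV f \<longrightarrow>
      (\<lambda>k. integral\<^sup>L (M k) f) \<longlonglongrightarrow> integral\<^sup>L \<mu> f)"

definition weak_limit_point :: "(nat \<Rightarrow> (nat \<Rightarrow> 'a::topological_space) measure) \<Rightarrow> (nat \<Rightarrow> 'a) measure \<Rightarrow> bool" where
  "weak_limit_point M \<mu> \<longleftrightarrow> (\<exists>r. strict_mono r \<and> weak_conv (M \<circ> r) \<mu>)"

definition equilibrium_state :: "((nat \<Rightarrow> 'a::topological_space) \<Rightarrow> real) \<Rightarrow> (nat \<Rightarrow> 'a) measure \<Rightarrow> bool" where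
  "equilibrium_state \<phi> \<mu> \<longleftrightarrow> \<mu> \<in> invariant_measures \<and>
     ks_entropy \<mu> + integral\<^sup>L \<mu> \<phi> = (SUP \<nu>\<in>invariant_measures. ks_entropy \<nu> + integral\<^sup>L \<nu> \<phi>)"

end

theory Submission
  imports Defs
begin


lemma compact_UNIV_shift: "compact (UNIV :: (nat \<Rightarrow> 'a::{finite,topological_space}) set)"
proof -
  have "compact_space (euclidean :: 'a topology)"
    unfolding compact_space_def by (simp add: finite_imp_compact)
  then have "compact_space (product_topology (\<lambda>i::nat. euclidean :: 'a topology) UNIV)"
    by (simp add: compact_space_product_topology)
  then have "compact_space (euclidean :: (nat \<Rightarrow> 'a) topology)"
    by (simp add: euclidean_product_topology)
  then show ?thesis unfolding compact_space_def by simp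
qed

lemma open_cylinder: "open (cylinder (w::'a::discrete_topology list))"
proof -
  have "cylinder w = {f. \<forall>i\<in>{..<length w}. f (id i) \<in> {w!i}}"
    by (auto simp: cylinder_def)
  also have "open \<dots>" by (rule product_topology_basis') (auto simp: discrete_topology_class.open_discrete)
  finally show ?thesis .
qed

lemma closed_cylinder: "closed (cylinder (w::'a::discrete_topology list))"
proof -
  have "cylinder w = (\<Inter>i\<in>{..<length w}. (\<lambda>f. f i) -` {w!i} \<inter> UNIV)"
    by (auto simp: cylinder_def)
  also have "closed \<dots>"
  proof (intro closed_INT ballI)
    fix i
    have "closed {w!i}" by (simp add: closed_def discrete_topology_class.open_discrete)
    then show "closed ((\<lambda>f. f i) -` {w!i} \<inter> UNIV)"
      using continuous_on_closed_vimage[of UNIV "\<lambda>f::nat\<Rightarrow>'a. f i"] by auto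
  qed
  finally show ?thesis .
qed

lemma continuous_indicator_cylinder:
  "continuous_on UNIV (indicator (cylinder (w::'a::discrete_topology list)) :: _ \<Rightarrow> real)"
  unfolding continuous_on_open_invariant
proof (intro allI impI)
  fix B :: "real set" assume "open B"
  let ?C = "cylinder w"
  have eq: "indicator ?C -` B \<inter> UNIV = (if (1::real) \<in> B then ?C else {}) \<union> (if (0::real) \<in> B then -?C else {})"
    by (cases "(1::real) \<in> B"; cases "(0::real) \<in> B") (auto simp: indicator_def of_bool_def split: if_splits)
  have "open (-?C)" using closed_cylinder[of w] by (simp add: open_Compl)
  then have "open ((if (1::real) \<in> B then ?C else {}) \<union> (if (0::real) \<in> B then -?C else {}))"
    using open_cylinder[of w] by auto
  then show "\<exists>A. open A \<and> A \<inter> UNIV = indicator ?C -` B \<inter> UNIV"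
    using eq by (metis inf_top.right_neutral)
qed



definition pre :: "nat \<Rightarrow> (nat \<Rightarrow> 'a) \<Rightarrow> 'a list" where
  "pre n x = map x [0..<n]"

lemma length_pre[simp]: "length (pre n x) = n" by (simp add: pre_def)

lemma cylinder_pre: "cylinder (pre n x) = {y. \<forall>i<n. y i = x i}"
  by (auto simp: cylinder_def pre_def)

lemma local_cont:
  fixes \<phi> :: "(nat \<Rightarrow> 'a::{finite, discrete_topology}) \<Rightarrow> real"
  assumes "continuous_on UNIV \<phi>" "e > 0"
  shows "\<exists>k. \<forall>y. (\<forall>i<k. y i = z i) \<longrightarrow> \<bar>\<phi> y - \<phi> z\<bar> < e"
proof -
  have "open (ball (\<phi> z) e)" by simp
  then obtain A where A: "open A" "A \<inter> UNIV = \<phi> -` ball (\<phi> z) e \<inter> UNIV"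
    using assms(1) unfolding continuous_on_open_invariant by blast
  have "z \<in> A" using A assms(2) by auto
  have "openin (product_topology (\<lambda>i. euclidean) UNIV) A"
    using A(1) by (simp add: open_fun_def)
  from product_topology_open_contains_basis[OF this \<open>z \<in> A\<close>]
  obtain X where X: "z \<in> (\<Pi>\<^sub>E i\<in>UNIV. X i)" "finite {i. X i \<noteq> topspace (euclidean::'a topology)}"
     "(\<Pi>\<^sub>E i\<in>UNIV. X i) \<subseteq> A" by blast
  obtain k where k: "{i. X i \<noteq> UNIV} \<subseteq> {..<k}" using finite_nat_bounded X(2) by auto
  show ?thesis
  proof (intro exI allI impI)
    fix y :: "nat \<Rightarrow> 'a" assume y: "\<forall>i<k. y i = z i"
    have "y \<in> (\<Pi>\<^sub>E i\<in>UNIV. X i)"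
    proof -
      have "y i \<in> X i" for i
      proof (cases "i < k")
        case True then show ?thesis using y X(1) by auto
      next
        case False then show ?thesis using k by auto
      qed
      then show ?thesis by auto
    qed
    then have "y \<in> A" using X(3) by blast
    then show "\<bar>\<phi> y - \<phi> z\<bar> < e" using A(2) by (auto simp: dist_real_def abs_minus_commute)
  qed
qed

lemma unif_cont:
  fixes \<phi> :: "(nat \<Rightarrow> 'a::{finite, discrete_topology}) \<Rightarrow> real"
  assumes "continuous_on UNIV \<phi>" "e > 0"
  shows "\<exists>k. \<forall>x y. (\<forall>i<k. x i = y i) \<longrightarrow> \<bar>\<phi> x - \<phi> y\<bar> < e"
proof -
  have "\<forall>z. \<exists>k. \<forall>y. (\<forall>i<k. y i = z i) \<longrightarrow> \<bar>\<phi> y - \<phi> z\<bar> < e/2"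
  proof
    fix z show "\<exists>k. \<forall>y. (\<forall>i<k. y i = z i) \<longrightarrow> \<bar>\<phi> y - \<phi> z\<bar> < e/2"
      using local_cont[OF assms(1), of "e/2" z] assms(2) by simp
  qed
  then obtain K where K0: "\<forall>z. \<forall>y. (\<forall>i<K z. y i = z i) \<longrightarrow> \<bar>\<phi> y - \<phi> z\<bar> < e/2"
    by (rule choice[THEN exE])
  then have K: "\<And>z y. (\<forall>i<K z. y i = z i) \<Longrightarrow> \<bar>\<phi> y - \<phi> z\<bar> < e/2" by blast
  have "open (cylinder (pre (K z) z))" for z by (rule open_cylinder)
  moreover have "UNIV \<subseteq> (\<Union>z\<in>UNIV. cylinder (pre (K z) z))"
  proof
    fix z :: "nat \<Rightarrow> 'a" have "z \<in> cylinder (pre (K z) z)" by (simp add: cylinder_pre)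
    then show "z \<in> (\<Union>z\<in>UNIV. cylinder (pre (K z) z))" by blast
  qed
  ultimately obtain C where C: "C \<subseteq> UNIV" "finite C" "UNIV \<subseteq> (\<Union>z\<in>C. cylinder (pre (K z) z))"
    by (rule compactE_image[OF compact_UNIV_shift, of UNIV "\<lambda>z. cylinder (pre (K z) z)"])
  show ?thesis
  proof (intro exI allI impI)
    fix x y :: "nat \<Rightarrow> 'a" assume xy: "\<forall>i<(\<Sum>z\<in>C. K z). x i = y i"
    obtain z where z: "z \<in> C" "x \<in> cylinder (pre (K z) z)" using C(3) by blast
    have le: "K z \<le> (\<Sum>z\<in>C. K z)" by (rule member_le_sum[OF z(1) _ C(2)]) auto
    have "\<forall>i<K z. x i = z i" using z(2) by (simp add: cylinder_pre)
    moreover have "\<forall>i<K z. y i = z i" using z(2) xy le by (auto simp: cylinder_pre)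
    ultimately have "\<bar>\<phi> x - \<phi> z\<bar> < e/2" "\<bar>\<phi> y - \<phi> z\<bar> < e/2" using K by auto
    then show "\<bar>\<phi> x - \<phi> y\<bar> < e" by linarith
  qed
qed

lemma bounded_cont:
  fixes \<phi> :: "(nat \<Rightarrow> 'a::{finite, discrete_topology}) \<Rightarrow> real"
  assumes "continuous_on UNIV \<phi>"
  shows "\<exists>B. \<forall>x. \<bar>\<phi> x\<bar> \<le> B"
proof -
  have "compact (\<phi> ` UNIV)" by (rule compact_continuous_image[OF assms compact_UNIV_shift])
  then have "bounded (\<phi> ` UNIV)" by (rule compact_imp_bounded)
  then show ?thesis by (auto simp: bounded_iff)
qed



lemma words_iff[simp]: "w \<in> words n \<longleftrightarrow> length w = n" by (simp add: words_def)

lemma finite_words[simp]: "finite (words n :: 'a::finite list set)"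
  by (simp add: words_def finite_list_length)

lemma card_words: "card (words n :: 'a::finite list set) = CARD('a) ^ n"
  using card_lists_length_eq[of "UNIV :: 'a set" n] by (simp add: words_def)

lemma words_nonempty: "words n \<noteq> {}"
  using words_iff[of "replicate n undefined" n] by (metis empty_iff length_replicate)

lemma partition_pos: "partition_fn (\<phi>::(nat \<Rightarrow> 'a::finite) \<Rightarrow> real) n > 0"
  unfolding partition_fn_def using words_nonempty[of n]
  by (intro sum_pos) auto

definition cw :: "((nat \<Rightarrow> 'a) \<Rightarrow> real) \<Rightarrow> nat \<Rightarrow> 'a list \<Rightarrow> real" where
  "cw \<phi> n w = exp (U_word \<phi> w) / partition_fn \<phi> n"

lemma cw_pos: "cw (\<phi>::(nat \<Rightarrow> 'a::finite) \<Rightarrow> real) n w > 0"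
  using partition_pos[of \<phi> n] by (simp add: cw_def)

lemma cw_sum: "(\<Sum>w\<in>words n. cw (\<phi>::(nat \<Rightarrow> 'a::finite) \<Rightarrow> real) n w) = 1"
  using partition_pos[of \<phi> n] by (simp add: cw_def sum_divide_distrib[symmetric] partition_fn_def)

definition Mn :: "((nat \<Rightarrow> 'a::topological_space) \<Rightarrow> real) \<Rightarrow> nat \<Rightarrow> (nat \<Rightarrow> 'a) measure" where
  "Mn \<phi> n = distr (point_measure (words n) (\<lambda>w. ennreal (cw \<phi> n w))) borel periodic_pt"

lemma space_Mn[simp]: "space (Mn \<phi> n) = UNIV" by (simp add: Mn_def)
lemma sets_Mn[simp]: "sets (Mn \<phi> n) = sets borel" by (simp add: Mn_def)

lemma emeasure_Mn:
  fixes \<phi> :: "(nat \<Rightarrow> 'a::{finite,topological_space}) \<Rightarrow> real"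
  assumes "B \<in> sets borel"
  shows "emeasure (Mn \<phi> n) B = ennreal (\<Sum>w\<in>{w\<in>words n. periodic_pt w \<in> B}. cw \<phi> n w)"
proof -
  have "emeasure (Mn \<phi> n) B = emeasure (point_measure (words n) (\<lambda>w. ennreal (cw \<phi> n w)))
      (periodic_pt -` B \<inter> words n)"
    unfolding Mn_def by (subst emeasure_distr) (auto simp: assms space_point_measure)
  also have "\<dots> = (\<Sum>w\<in>periodic_pt -` B \<inter> words n. ennreal (cw \<phi> n w))"
    by (rule emeasure_point_measure_finite) auto
  also have "\<dots> = ennreal (\<Sum>w\<in>periodic_pt -` B \<inter> words n. cw \<phi> n w)"
    using cw_pos[of \<phi> n] by (intro sum_ennreal) (auto intro: less_imp_le)
  also have "periodic_pt -` B \<inter> words n = {w\<in>words n. periodic_pt w \<in> B}" by auto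
  finally show ?thesis .
qed

lemma mu_n_eq: "mu_n (\<phi>::(nat \<Rightarrow> 'a::{finite,topological_space}) \<Rightarrow> real) n = Mn \<phi> n"
proof -
  have "Mn \<phi> n = measure_of UNIV (sets borel) (emeasure (Mn \<phi> n))"
    using measure_of_of_measure[of "Mn \<phi> n"] by simp
  also have "\<dots> = mu_n \<phi> n"
    unfolding mu_n_def
  proof (rule measure_of_eq)
    show "sets borel \<subseteq> Pow UNIV" by simp
    fix a :: "(nat \<Rightarrow> 'a) set" assume "a \<in> sigma_sets UNIV (sets borel)"
    then have a: "a \<in> sets borel" using sets.sigma_sets_subset[of "sets borel" borel] by auto
    show "emeasure (Mn \<phi> n) a = ennreal (\<Sum>w\<in>{w\<in>words n. periodic_pt w \<in> a}. exp (U_word \<phi> w) / partition_fn \<phi> n)"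
      by (simp add: emeasure_Mn[OF a] cw_def)
  qed
  finally show ?thesis by simp
qed

lemma prob_Mn: "prob_space (Mn (\<phi>::(nat \<Rightarrow> 'a::{finite,topological_space}) \<Rightarrow> real) n)"
proof
  show "emeasure (Mn \<phi> n) (space (Mn \<phi> n)) = 1"
  proof -
    have "{w\<in>words n. periodic_pt w \<in> UNIV} = words n" by auto
    then show ?thesis using cw_sum[of \<phi> n] by (simp add: emeasure_Mn del: words_iff)
  qed
qed

lemma integral_Mn:
  fixes \<phi> :: "(nat \<Rightarrow> 'a::{finite,topological_space}) \<Rightarrow> real"
  assumes "f \<in> borel_measurable borel"
  shows "integral\<^sup>L (Mn \<phi> n) f = (\<Sum>w\<in>words n. cw \<phi> n w * f (periodic_pt w))"
proof -
  have "integral\<^sup>L (Mn \<phi> n) f = integral\<^sup>L (point_measure (words n) (\<lambda>w. ennreal (cw \<phi> n w))) (\<lambda>w. f (periodic_pt w))"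
    unfolding Mn_def by (rule integral_distr) (auto simp: assms space_point_measure)
  also have "\<dots> = (\<Sum>w\<in>words n. cw \<phi> n w *\<^sub>R f (periodic_pt w))"
    using cw_pos[of \<phi> n] by (intro lebesgue_integral_point_measure_finite) (auto intro: less_imp_le)
  finally show ?thesis by simp
qed

lemma measure_Mn_cylinder:
  fixes \<phi> :: "(nat \<Rightarrow> 'a::{finite,discrete_topology}) \<Rightarrow> real"
  assumes "length v = n"
  shows "measure (Mn \<phi> n) (cylinder v) = cw \<phi> n v"
proof -
  have "{w\<in>words n. periodic_pt w \<in> cylinder v} = {v}"
  proof safe
    fix w assume w: "w \<in> words n" "periodic_pt w \<in> cylinder v"
    show "w = v"
    proof (rule nth_equalityI)
      show "length w = length v" using w assms by simp
      fix i assume "i < length w"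
      then show "w ! i = v ! i" using w assms by (auto simp: cylinder_def periodic_pt_def)
    qed
  next
    show "v \<in> words n" using assms by simp
    show "periodic_pt v \<in> cylinder v" by (auto simp: cylinder_def periodic_pt_def)
  qed
  moreover have "cylinder v \<in> sets borel" using open_cylinder by (rule borel_open)
  ultimately show ?thesis
    using cw_pos[of \<phi> n v] by (simp add: measure_def emeasure_Mn less_imp_le)
qed



lemma sum_rotate1: "(\<Sum>w\<in>words n. g (rotate1 w)) = (\<Sum>w\<in>words n. g w)"
proof -
  have inj: "inj_on rotate1 (words n)" using inj_rotate1 by (rule inj_on_subset) simp
  have img: "rotate1 ` words n = words n"
  proof
    show "rotate1 ` words n \<subseteq> words n" by auto
    show "words n \<subseteq> rotate1 ` words n"
    proof
      fix w assume w: "w \<in> words n"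
      obtain w' where "w = rotate1 w'" using surj_rotate1 by (metis surjD)
      then show "w \<in> rotate1 ` words n" using w by auto
    qed
  qed
  have "(\<Sum>w\<in>words n. g w) = (\<Sum>w\<in>rotate1 ` words n. g w)" by (simp add: img)
  also have "\<dots> = (\<Sum>w\<in>words n. g (rotate1 w))" by (rule sum.reindex[OF inj, unfolded comp_def])
  finally show ?thesis by simp
qed

lemma sum_rotate: "(\<Sum>w\<in>words n. g (rotate k w)) = (\<Sum>w\<in>words n. g w)"
proof (induction k arbitrary: g)
  case 0 then show ?case by simp
next
  case (Suc k)
  have "(\<Sum>w\<in>words n. g (rotate (Suc k) w)) = (\<Sum>w\<in>words n. (\<lambda>v. g (rotate1 v)) (rotate k w))"
    by simp
  also have "\<dots> = (\<Sum>w\<in>words n. g (rotate1 w))" by (rule Suc.IH)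
  also have "\<dots> = (\<Sum>w\<in>words n. g w)" by (rule sum_rotate1)
  finally show ?case .
qed

lemma U_rotate1: "U_word \<phi> (rotate1 w) = U_word \<phi> w"
proof -
  define g where "g i = phi_word \<phi> (rotate i w)" for i
  have r: "rotate i (rotate1 w) = rotate (Suc i) w" for i
    by (simp add: rotate1_rotate_swap)
  have "U_word \<phi> (rotate1 w) = (\<Sum>i<length w. g (Suc i))"
    by (simp add: U_word_def g_def r del: rotate_Suc)
  also have "\<dots> = (\<Sum>i<length w. g i)"
  proof -
    have e1: "(\<Sum>i<Suc (length w). g i) = g 0 + (\<Sum>i<length w. g (Suc i))"
      by (rule sum.lessThan_Suc_shift)
    have e2: "(\<Sum>i<Suc (length w). g i) = (\<Sum>i<length w. g i) + g (length w)"
      by simp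
    have "g (length w) = g 0" by (simp add: g_def)
    then show ?thesis using e1 e2 by linarith
  qed
  finally show ?thesis by (simp add: U_word_def g_def)
qed

lemma U_rotate: "U_word \<phi> (rotate k w) = U_word \<phi> w"
  by (induction k) (simp_all add: U_rotate1)

lemma cw_rotate: "cw \<phi> n (rotate k w) = cw \<phi> n w"
  by (simp add: cw_def U_rotate)

lemma shift_pow: "(shift ^^ k) x j = x (k + j)"
  by (induction k arbitrary: j) (simp_all add: shift_def)

lemma pp_rotate:
  assumes "length w > 0"
  shows "periodic_pt (rotate k w) = (shift ^^ k) (periodic_pt w)"
proof
  fix j
  have "rotate k w ! (j mod length w) = w ! ((k + j mod length w) mod length w)"
    using assms by (simp add: nth_rotate)
  also have "(k + j mod length w) mod length w = (k + j) mod length w"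
    by (simp add: mod_add_right_eq)
  finally show "periodic_pt (rotate k w) j = (shift ^^ k) (periodic_pt w) j"
    by (simp add: periodic_pt_def shift_pow)
qed

lemma continuous_shift: "continuous_on UNIV (shift :: (nat \<Rightarrow> 'a::topological_space) \<Rightarrow> _)"
  unfolding shift_def by (intro continuous_on_coordinatewise_then_product) simp

lemma measurable_shift[measurable]: "shift \<in> borel_measurable borel"
  by (rule borel_measurable_continuous_onI[OF continuous_shift])

lemma Mn_invariant:
  fixes \<phi> :: "(nat \<Rightarrow> 'a::{finite,topological_space}) \<Rightarrow> real"
  assumes "n > 0"
  shows "Mn \<phi> n \<in> invariant_measures"
proof -
  have "distr (Mn \<phi> n) borel shift = Mn \<phi> n"
  proof (rule measure_eqI)
    show "sets (distr (Mn \<phi> n) borel shift) = sets (Mn \<phi> n)" by simp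
    fix A assume A: "A \<in> sets (distr (Mn \<phi> n) borel shift)"
    then have A': "A \<in> sets borel" by simp
    have "emeasure (distr (Mn \<phi> n) borel shift) A = emeasure (Mn \<phi> n) (shift -` A)"
      using A' by (subst emeasure_distr) (auto simp: measurable_cong_sets[OF sets_Mn refl])
    also have "\<dots> = ennreal (\<Sum>w\<in>{w\<in>words n. periodic_pt w \<in> shift -` A}. cw \<phi> n w)"
      using A' by (intro emeasure_Mn) (simp add: measurable_sets_borel[OF measurable_shift])
    also have "(\<Sum>w\<in>{w\<in>words n. periodic_pt w \<in> shift -` A}. cw \<phi> n w)
        = (\<Sum>w\<in>words n. if periodic_pt (rotate1 w) \<in> A then cw \<phi> n (rotate1 w) else 0)"
    proof -
      have "periodic_pt (rotate1 w) = shift (periodic_pt w)" if "w \<in> words n" for w :: "'a list"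
        using pp_rotate[of w 1] that assms by auto
      moreover have "cw \<phi> n (rotate1 w) = cw \<phi> n w" for w
        using cw_rotate[of \<phi> n 1 w] by simp
      ultimately show ?thesis by (simp add: sum.inter_filter[symmetric])
    qed
    also have "\<dots> = (\<Sum>w\<in>words n. if periodic_pt w \<in> A then cw \<phi> n w else 0)"
      by (rule sum_rotate1)
    also have "\<dots> = (\<Sum>w\<in>{w\<in>words n. periodic_pt w \<in> A}. cw \<phi> n w)"
      by (simp add: sum.inter_filter[symmetric])
    finally show "emeasure (distr (Mn \<phi> n) borel shift) A = emeasure (Mn \<phi> n) A"
      using emeasure_Mn[OF A'] by simp
  qed
  then show ?thesis
    using prob_Mn by (simp add: invariant_measures_def borel_prob_def)
qed

lemma integral_U_Mn:
  fixes \<phi> :: "(nat \<Rightarrow> 'a::{finite,topological_space}) \<Rightarrow> real"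
  assumes "n > 0" "\<phi> \<in> borel_measurable borel"
  shows "(\<Sum>w\<in>words n. cw \<phi> n w * U_word \<phi> w) = real n * integral\<^sup>L (Mn \<phi> n) \<phi>"
proof -
  have "(\<Sum>w\<in>words n. cw \<phi> n w * U_word \<phi> w)
      = (\<Sum>i<n. \<Sum>w\<in>words n. cw \<phi> n (rotate i w) * \<phi> (periodic_pt (rotate i w)))"
    by (simp add: U_word_def phi_word_def sum_distrib_left cw_rotate sum.swap[of _ "{..<n}"])
  also have "\<dots> = (\<Sum>i<n. \<Sum>w\<in>words n. cw \<phi> n w * \<phi> (periodic_pt w))"
    by (intro sum.cong refl sum_rotate)
  also have "\<dots> = real n * integral\<^sup>L (Mn \<phi> n) \<phi>"
    by (simp add: integral_Mn[OF assms(2)])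
  finally show ?thesis .
qed



lemma gibbs:
  fixes p q :: "'b \<Rightarrow> real"
  assumes "finite S" "\<And>s. s \<in> S \<Longrightarrow> 0 \<le> p s" "sum p S = 1"
    "\<And>s. s \<in> S \<Longrightarrow> 0 \<le> q s" "sum q S \<le> 1" "\<And>s. s \<in> S \<Longrightarrow> p s > 0 \<Longrightarrow> q s > 0"
  shows "- (\<Sum>s\<in>S. p s * ln (p s)) \<le> - (\<Sum>s\<in>S. p s * ln (q s))"
proof -
  have tm: "p s * ln (q s) - p s * ln (p s) \<le> q s - p s" if s: "s \<in> S" for s
  proof (cases "p s = 0")
    case True then show ?thesis using assms(4)[OF s] by simp
  next
    case False
    then have ps: "p s > 0" using assms(2)[OF s] by simp
    then have qs: "q s > 0" using assms(6)[OF s] by simp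
    have "ln (q s / p s) \<le> q s / p s - 1" using ps qs by (intro ln_le_minus_one) simp
    then have "p s * ln (q s / p s) \<le> p s * (q s / p s - 1)" using ps by (intro mult_left_mono) auto
    also have "p s * (q s / p s - 1) = q s - p s" using ps by (simp add: field_simps)
    also have "ln (q s / p s) = ln (q s) - ln (p s)" using ps qs by (simp add: ln_div)
    finally show ?thesis by (simp add: algebra_simps)
  qed
  have "(\<Sum>s\<in>S. p s * ln (q s) - p s * ln (p s)) \<le> (\<Sum>s\<in>S. q s - p s)"
    by (rule sum_mono) (rule tm)
  then show ?thesis using assms(3,5) by (simp add: sum_subtractf)
qed

lemma neg_xlnx_nonneg: "0 \<le> x \<Longrightarrow> x \<le> 1 \<Longrightarrow> 0 \<le> - (x * ln (x::real))"
  by (cases "x = 0") (auto simp: mult_nonneg_nonpos)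

lemma subadd_bound:
  fixes a :: "nat \<Rightarrow> real"
  assumes sub: "\<And>m n. a (m + n) \<le> a m + a n"
    and nonneg: "\<And>n. 0 \<le> a n" and bnd: "\<And>n. a n \<le> real n * c"
    and "m > 0" "n > 0"
  shows "a n / real n \<le> a m / real m + real m * c / real n"
proof -
  have c: "0 \<le> c" using bnd[of 1] nonneg[of 1] by simp
  have it: "a (q * m + r) \<le> real q * a m + a r" for q r
  proof (induction q)
    case 0 then show ?case by simp
  next
    case (Suc q)
    have "a (Suc q * m + r) = a (m + (q * m + r))" by (simp add: algebra_simps)
    also have "\<dots> \<le> a m + a (q * m + r)" by (rule sub)
    also have "\<dots> \<le> a m + (real q * a m + a r)" using Suc by simp
    finally show ?case by (simp add: algebra_simps)
  qed
  have "a n = a ((n div m) * m + n mod m)" by simp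
  also have "\<dots> \<le> real (n div m) * a m + a (n mod m)" by (rule it)
  also have "real (n div m) * a m \<le> (real n / real m) * a m"
  proof (rule mult_right_mono)
    show "real (n div m) \<le> real n / real m"
    proof -
      have "n div m * m \<le> n" by simp
      then have "real (n div m) * real m \<le> real n" by (metis of_nat_le_iff of_nat_mult)
      then show ?thesis using assms(4) by (simp add: le_divide_eq)
    qed
  qed (rule nonneg)
  also have "a (n mod m) \<le> real m * c"
  proof -
    have "a (n mod m) \<le> real (n mod m) * c" by (rule bnd)
    also have "\<dots> \<le> real m * c" using assms(4) c by (intro mult_right_mono) (auto simp: less_imp_le)
    finally show ?thesis .
  qed
  finally have "a n \<le> real n / real m * a m + real m * c" by simp
  then have "a n / real n \<le> (real n / real m * a m + real m * c) / real n"
    using assms(5) by (intro divide_right_mono) auto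
  also have "\<dots> = a m / real m + real m * c / real n"
    using assms(5) by (simp add: add_divide_distrib)
  finally show ?thesis .
qed

lemma fekete:
  fixes a :: "nat \<Rightarrow> real"
  assumes sub: "\<And>m n. a (m + n) \<le> a m + a n"
    and nonneg: "\<And>n. 0 \<le> a n" and bnd: "\<And>n. a n \<le> real n * c"
  shows "\<exists>L. (\<lambda>n. a n / real n) \<longlonglongrightarrow> L \<and> (\<forall>m>0. L \<le> a m / real m)"
proof -
  define L where "L = Inf (range (\<lambda>m. a (Suc m) / real (Suc m)))"
  have bdd: "bdd_below (range (\<lambda>m. a (Suc m) / real (Suc m)))"
  proof (rule bdd_belowI)
    fix x assume "x \<in> range (\<lambda>m. a (Suc m) / real (Suc m))"
    then obtain m where "x = a (Suc m) / real (Suc m)" by blast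
    then show "0 \<le> x" using nonneg[of "Suc m"] by simp
  qed
  have low: "L \<le> a m / real m" if mpos: "m > 0" for m
  proof -
    obtain k where "m = Suc k" using gr0_implies_Suc[OF mpos] by (elim exE)
    have "L \<le> a (Suc k) / real (Suc k)" unfolding L_def by (rule cInf_lower[OF rangeI bdd])
    then show ?thesis using \<open>m = Suc k\<close> by simp
  qed
  have c: "0 \<le> c" using bnd[of 1] nonneg[of 1] by simp
  have "(\<lambda>n. a n / real n) \<longlonglongrightarrow> L"
  proof (rule LIMSEQ_I)
    fix r :: real assume r: "r > 0"
    have lt: "Inf (range (\<lambda>m. a (Suc m) / real (Suc m))) < L + r/2" using r by (simp add: L_def)
    have "\<exists>x\<in>range (\<lambda>m. a (Suc m) / real (Suc m)). x < L + r/2"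
      by (rule cInf_lessD[OF _ lt]) simp
    then obtain k where k: "a (Suc k) / real (Suc k) < L + r/2" by blast
    define m where "m = Suc k"
    obtain N where N: "real N > real m * c / (r/2)" using reals_Archimedean2 by blast
    show "\<exists>no. \<forall>n\<ge>no. norm (a n / real n - L) < r"
    proof (intro exI allI impI)
      fix n assume n: "Suc N \<le> n"
      then have npos: "n > 0" by simp
      have Npos: "N > 0"
      proof (rule ccontr)
        assume "\<not> N > 0"
        then have "real m * c / (r/2) < 0" using N by simp
        moreover have "real m * c / (r/2) \<ge> 0" using c r by simp
        ultimately show False by simp
      qed
      have h1: "a n / real n \<le> a m / real m + real m * c / real n"
        using subadd_bound[OF sub nonneg bnd, of m n] npos by (simp add: m_def)
      have h2: "real m * c / real n \<le> real m * c / real N"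
        using n c Npos by (intro divide_left_mono) auto
      have h3: "real m * c / real N < r/2"
      proof -
        have "real m * c / (r/2) < real N" using N .
        then have "real m * c < real N * (r/2)" using r by (simp add: pos_divide_less_eq)
        then show ?thesis using Npos by (simp add: pos_divide_less_eq mult.commute)
      qed
      have "a m / real m < L + r/2" using k m_def by simp
      then have "a n / real n < L + r" using h1 h2 h3 by linarith
      moreover have "L \<le> a n / real n" using low npos by simp
      ultimately show "norm (a n / real n - L) < r" by simp
    qed
  qed
  then show ?thesis using low by (intro exI[of _ L]) simp
qed



lemma borel_prob_facts:
  assumes "borel_prob \<rho>"
  shows "prob_space \<rho>" "sets \<rho> = sets borel" "space \<rho> = UNIV"
  using assms sets_eq_imp_space_eq[of \<rho> borel] by (auto simp: borel_prob_def)

lemma cyl_disj: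
  assumes "length v = length w" "v \<noteq> w"
  shows "cylinder v \<inter> cylinder w = {}"
proof -
  obtain i where "i < length v" "v ! i \<noteq> w ! i" using assms nth_equalityI by blast
  then show ?thesis using assms by (auto simp: cylinder_def)
qed

lemma in_cyl_iff:
  assumes "length w = n" shows "x \<in> cylinder w \<longleftrightarrow> w = pre n x"
proof
  assume x: "x \<in> cylinder w"
  show "w = pre n x"
  proof (rule nth_equalityI)
    show "length w = length (pre n x)" using assms by simp
    fix i assume "i < length w"
    then show "w ! i = pre n x ! i" using x assms by (auto simp: cylinder_def pre_def)
  qed
next
  assume "w = pre n x" then show "x \<in> cylinder w" by (simp add: cylinder_pre)
qed

lemma cyl_union: "(\<Union>w\<in>words n. cylinder w) = UNIV"
proof -
  have "x \<in> (\<Union>w\<in>words n. cylinder w)" for x :: "nat \<Rightarrow> 'a"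
  proof (rule UN_I)
    show "pre n x \<in> words n" by simp
    show "x \<in> cylinder (pre n x)" by (simp add: cylinder_pre)
  qed
  then show ?thesis by auto
qed

lemma measure_partition:
  assumes bp: "borel_prob \<rho>" and I: "finite I" and B: "\<And>i. i \<in> I \<Longrightarrow> B i \<in> sets borel"
    and disj: "disjoint_family_on B I" and cov: "(\<Union>i\<in>I. B i) = UNIV" and A: "A \<in> sets borel"
  shows "(\<Sum>i\<in>I. measure \<rho> (A \<inter> B i)) = measure \<rho> A"
proof -
  interpret prob_space \<rho> using borel_prob_facts[OF bp] by simp
  have "measure \<rho> (\<Union>i\<in>I. A \<inter> B i) = (\<Sum>i\<in>I. measure \<rho> (A \<inter> B i))"
    using I B A disj borel_prob_facts(2)[OF bp]
    by (intro finite_measure_finite_Union) (auto simp: disjoint_family_on_def)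
  moreover have "(\<Union>i\<in>I. A \<inter> B i) = A" using cov by auto
  ultimately show ?thesis by simp
qed

lemma cyl_borel[measurable]: "cylinder (w::'a::discrete_topology list) \<in> sets borel"
  by (rule borel_open[OF open_cylinder])

lemma disj_cyl: "disjoint_family_on cylinder (words n)"
  unfolding disjoint_family_on_def
proof (intro ballI impI)
  fix v w :: "'a list" assume "v \<in> words n" "w \<in> words n" "v \<noteq> w"
  then show "cylinder v \<inter> cylinder w = {}" by (intro cyl_disj) auto
qed

lemma measure_split_cyl:
  fixes \<rho> :: "(nat \<Rightarrow> 'a::{finite,discrete_topology}) measure"
  assumes "borel_prob \<rho>" "A \<in> sets borel"
  shows "(\<Sum>w\<in>words n. measure \<rho> (A \<inter> cylinder w)) = measure \<rho> A"
  using assms(1) _ _ disj_cyl cyl_union assms(2) by (rule measure_partition) auto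

lemma cyl_sum1:
  fixes \<rho> :: "(nat \<Rightarrow> 'a::{finite,discrete_topology}) measure"
  assumes "borel_prob \<rho>"
  shows "(\<Sum>w\<in>words n. measure \<rho> (cylinder w)) = 1"
proof -
  interpret prob_space \<rho> using borel_prob_facts[OF assms] by simp
  show ?thesis using measure_split_cyl[OF assms, of UNIV n] prob_space borel_prob_facts(3)[OF assms]
    by simp
qed

lemma integral_pre:
  fixes \<rho> :: "(nat \<Rightarrow> 'a::{finite,discrete_topology}) measure"
  assumes bp: "borel_prob \<rho>"
  shows "integral\<^sup>L \<rho> (\<lambda>x. g (pre n x)) = (\<Sum>w\<in>words n. g w * measure \<rho> (cylinder w))"
proof -
  interpret prob_space \<rho> using borel_prob_facts[OF bp] by simp
  have eq: "g (pre n x) = (\<Sum>w\<in>words n. g w * indicator (cylinder w) x)" for x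
  proof -
    have "(\<Sum>w\<in>words n. g w * indicator (cylinder w) x) = (\<Sum>w\<in>words n. if w = pre n x then g w else 0)"
      by (intro sum.cong refl) (simp add: in_cyl_iff indicator_def)
    also have "\<dots> = g (pre n x)" by (simp add: sum.delta)
    finally show ?thesis by simp
  qed
  have "integral\<^sup>L \<rho> (\<lambda>x. g (pre n x)) = integral\<^sup>L \<rho> (\<lambda>x. \<Sum>w\<in>words n. g w * indicator (cylinder w) x)"
    by (intro Bochner_Integration.integral_cong refl) (rule eq)
  also have "\<dots> = (\<Sum>w\<in>words n. integral\<^sup>L \<rho> (\<lambda>x. g w * indicator (cylinder w) x))"
  proof (rule Bochner_Integration.integral_sum)
    fix w :: "'a list"
    have cs: "cylinder w \<in> sets \<rho>" using borel_prob_facts(2)[OF bp] by simp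
    have "emeasure \<rho> (cylinder w) < \<infinity>" using emeasure_finite[of "cylinder w"] by (simp add: less_top[symmetric])
    then have "integrable \<rho> (indicat_real (cylinder w))" by (rule integrable_real_indicator[OF cs])
    then show "integrable \<rho> (\<lambda>x. g w * indicat_real (cylinder w) x)" by (rule integrable_mult_right)
  qed
  also have "\<dots> = (\<Sum>w\<in>words n. g w * measure \<rho> (cylinder w))"
    using borel_prob_facts(3)[OF bp] by (simp add: Bochner_Integration.integral_indicator)
  finally show ?thesis .
qed

lemma block_entropy_nonneg:
  fixes \<rho> :: "(nat \<Rightarrow> 'a::{finite,discrete_topology}) measure"
  assumes bp: "borel_prob \<rho>"
  shows "0 \<le> block_entropy \<rho> n"
proof -
  interpret prob_space \<rho> using borel_prob_facts[OF bp] by simp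
  have "0 \<le> (\<Sum>w\<in>words n. - (measure \<rho> (cylinder w) * ln (measure \<rho> (cylinder w))))"
    by (intro sum_nonneg neg_xlnx_nonneg[OF measure_nonneg prob_le_1])
  then show ?thesis by (simp add: block_entropy_def sum_negf)
qed

lemma block_entropy_le:
  fixes \<rho> :: "(nat \<Rightarrow> 'a::{finite,discrete_topology}) measure"
  assumes bp: "borel_prob \<rho>"
  shows "block_entropy \<rho> n \<le> real n * ln (real CARD('a))"
proof -
  interpret prob_space \<rho> using borel_prob_facts[OF bp] by simp
  define N where "N = real (card (words n :: 'a list set))"
  have Npos: "N > 0" using words_nonempty[of n] by (simp add: N_def card_gt_0_iff)
  have "block_entropy \<rho> n \<le> - (\<Sum>w\<in>words n. measure \<rho> (cylinder w) * ln (1 / N))"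
    unfolding block_entropy_def
    by (rule gibbs) (use cyl_sum1[OF bp, of n] Npos in \<open>auto simp: N_def\<close>)
  also have "\<dots> = - ((\<Sum>w\<in>words n. measure \<rho> (cylinder w)) * ln (1 / N))"
    by (simp only: sum_distrib_right)
  also have "\<dots> = ln N"
    using cyl_sum1[OF bp, of n] Npos by (simp add: ln_div)
  also have "ln N = real n * ln (real CARD('a))"
    by (simp add: N_def card_words ln_realpow)
  finally show ?thesis .
qed

lemma block_entropy_0:
  fixes \<rho> :: "(nat \<Rightarrow> 'a::{finite,discrete_topology}) measure"
  assumes bp: "borel_prob \<rho>"
  shows "block_entropy \<rho> 0 = 0"
  using block_entropy_nonneg[OF bp, of 0] block_entropy_le[OF bp, of 0] by simp

lemma shift_pow_eq: "(shift ^^ k) = (\<lambda>x j. x (k + j))"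
  by (intro ext) (simp add: shift_pow)

lemma measurable_shift_pow[measurable]: "(shift ^^ k) \<in> borel_measurable borel"
proof -
  have "continuous_on UNIV (\<lambda>(x::nat \<Rightarrow> 'a) j. x (k + j))"
    by (intro continuous_on_coordinatewise_then_product) simp
  then show ?thesis unfolding shift_pow_eq by (rule borel_measurable_continuous_onI)
qed

lemma invariant_preimage:
  assumes inv: "\<rho> \<in> invariant_measures" and A: "A \<in> sets borel"
  shows "measure \<rho> ((shift ^^ k) -` A) = measure \<rho> A"
  using A
proof (induction k arbitrary: A)
  case 0 then show ?case by simp
next
  case (Suc k)
  have bp: "borel_prob \<rho>" using inv unfolding invariant_measures_def by blast
  have d: "distr \<rho> borel shift = \<rho>" using inv unfolding invariant_measures_def by blast
  have s\<rho>: "sets \<rho> = sets borel" and sp: "space \<rho> = UNIV" using borel_prob_facts[OF bp] by auto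
  have ms: "shift \<in> measurable \<rho> borel"
    by (subst measurable_cong_sets[OF s\<rho> refl]) (rule measurable_shift)
  have sA: "shift -` A \<in> sets borel" using Suc.prems by (rule measurable_sets_borel[OF measurable_shift])
  have "(shift ^^ Suc k) -` A = (shift ^^ k) -` (shift -` A)" by auto
  then have "measure \<rho> ((shift ^^ Suc k) -` A) = measure \<rho> (shift -` A)"
    using Suc.IH[OF sA] by simp
  also have "\<dots> = measure (distr \<rho> borel shift) A"
    using measure_distr[OF ms Suc.prems] sp by simp
  also have "\<dots> = measure \<rho> A" by (simp only: d)
  finally show ?case .
qed

lemma cyl_append:
  assumes "length u = a"
  shows "cylinder (u @ v) = cylinder u \<inter> (shift ^^ a) -` cylinder v"
proof -
  have "x \<in> cylinder (u @ v) \<longleftrightarrow> x \<in> cylinder u \<and> (shift ^^ a) x \<in> cylinder v" for x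
  proof
    assume x: "x \<in> cylinder (u @ v)"
    have "x \<in> cylinder u"
      using x assms unfolding cylinder_def by (auto simp: nth_append)
    moreover have "(shift ^^ a) x \<in> cylinder v"
      unfolding cylinder_def shift_pow
    proof (intro allI impI CollectI)
      fix i assume "i < length v"
      then have "x (a + i) = (u @ v) ! (a + i)" using x assms by (auto simp: cylinder_def)
      then show "x (a + i) = v ! i" using assms by (simp add: nth_append)
    qed
    ultimately show "x \<in> cylinder u \<and> (shift ^^ a) x \<in> cylinder v" by simp
  next
    assume x: "x \<in> cylinder u \<and> (shift ^^ a) x \<in> cylinder v"
    show "x \<in> cylinder (u @ v)"
      unfolding cylinder_def
    proof (intro allI impI CollectI)
      fix i assume i: "i < length (u @ v)"
      show "x i = (u @ v) ! i"
      proof (cases "i < a")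
        case True then show ?thesis using x assms by (auto simp: cylinder_def nth_append)
      next
        case False
        then obtain j where j: "i = a + j" by (metis le_add_diff_inverse not_less)
        then have "j < length v" using i assms by simp
        then have "(shift ^^ a) x j = v ! j" using x by (auto simp: cylinder_def)
        then show ?thesis using j assms by (simp add: shift_pow nth_append)
      qed
    qed
  qed
  then show ?thesis by auto
qed



lemma disj_preimage:
  "disjoint_family_on (\<lambda>v. (shift ^^ a) -` cylinder v) (words n)"
  unfolding disjoint_family_on_def
proof (intro ballI impI)
  fix v w :: "'a list" assume "v \<in> words n" "w \<in> words n" "v \<noteq> w"
  then have "cylinder v \<inter> cylinder w = {}" by (intro cyl_disj) auto
  then show "(shift ^^ a) -` cylinder v \<inter> (shift ^^ a) -` cylinder w = {}" by auto
qed

lemma cover_preimage: "(\<Union>v\<in>words n. (shift ^^ a) -` cylinder v) = UNIV"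
proof -
  have "(\<Union>v\<in>words n. (shift ^^ a) -` cylinder v) = (shift ^^ a) -` (\<Union>v\<in>words n. cylinder v)" by auto
  then show ?thesis by (simp add: cyl_union)
qed

lemma preimage_borel: "(shift ^^ a) -` cylinder (v::'a::discrete_topology list) \<in> sets borel"
  by (rule measurable_sets_borel[OF measurable_shift_pow cyl_borel])

lemma subadd_entropy:
  fixes \<rho> :: "(nat \<Rightarrow> 'a::{finite,discrete_topology}) measure"
  assumes inv: "\<rho> \<in> invariant_measures"
  shows "block_entropy \<rho> (a + b) \<le> block_entropy \<rho> a + block_entropy \<rho> b"
proof -
  have bp: "borel_prob \<rho>" using inv unfolding invariant_measures_def by blast
  interpret prob_space \<rho> using borel_prob_facts[OF bp] by simp
  have s\<rho>: "sets \<rho> = sets borel" using borel_prob_facts[OF bp] by simp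
  define P where "P u v = measure \<rho> (cylinder u \<inter> (shift ^^ a) -` cylinder v)" for u v :: "'a list"
  define q where "q u = measure \<rho> (cylinder u)" for u :: "'a list"
  define r where "r v = measure \<rho> (cylinder v)" for v :: "'a list"
  define S where "S = (words a :: 'a list set) \<times> (words b :: 'a list set)"
  have finS: "finite S" unfolding S_def by (intro finite_cartesian_product finite_words)
  have inj: "inj_on (\<lambda>(u, v). u @ v) S"
    by (auto simp: S_def inj_on_def)
  have img: "(\<lambda>(u, v). u @ v) ` S = words (a + b)"
  proof
    show "(\<lambda>(u, v). u @ v) ` S \<subseteq> words (a + b)" by (auto simp: S_def)
    show "words (a + b) \<subseteq> (\<lambda>(u, v). u @ v) ` S"
    proof
      fix w :: "'a list" assume w: "w \<in> words (a + b)"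
      have "w = (\<lambda>(u, v). u @ v) (take a w, drop a w)" by simp
      moreover have "(take a w, drop a w) \<in> S" using w by (auto simp: S_def)
      ultimately show "w \<in> (\<lambda>(u, v). u @ v) ` S" by blast
    qed
  qed
  have h1: "block_entropy \<rho> (a + b) = - (\<Sum>(u, v)\<in>S. P u v * ln (P u v))"
  proof -
    have "block_entropy \<rho> (a + b) = - (\<Sum>w\<in>(\<lambda>(u, v). u @ v) ` S. measure \<rho> (cylinder w) * ln (measure \<rho> (cylinder w)))"
      by (simp add: block_entropy_def img)
    also have "\<dots> = - (\<Sum>x\<in>S. measure \<rho> (cylinder ((\<lambda>(u, v). u @ v) x)) * ln (measure \<rho> (cylinder ((\<lambda>(u, v). u @ v) x))))"
      by (simp add: sum.reindex[OF inj])
    also have "\<dots> = - (\<Sum>(u, v)\<in>S. P u v * ln (P u v))"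
      by (intro arg_cong[where f = uminus] sum.cong refl) (auto simp: S_def P_def cyl_append)
    finally show ?thesis .
  qed
  have margu: "(\<Sum>v\<in>words b. P u v) = q u" for u
    unfolding P_def q_def
    by (rule measure_partition[OF bp finite_words preimage_borel disj_preimage cover_preimage cyl_borel])
  have margv: "(\<Sum>u\<in>words a. P u v) = r v" for v
  proof -
    have "(\<Sum>u\<in>words a. P u v) = (\<Sum>u\<in>words a. measure \<rho> ((shift ^^ a) -` cylinder v \<inter> cylinder u))"
      by (simp add: P_def Int_commute)
    also have "\<dots> = measure \<rho> ((shift ^^ a) -` cylinder v)"
      by (rule measure_partition[OF bp finite_words cyl_borel disj_cyl cyl_union preimage_borel])
    also have "\<dots> = r v" unfolding r_def by (rule invariant_preimage[OF inv cyl_borel])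
    finally show ?thesis .
  qed
  have P_nonneg: "0 \<le> P u v" for u v by (simp add: P_def)
  have P_le_q: "P u v \<le> q u" for u v
    unfolding P_def q_def by (rule finite_measure_mono) (auto simp: s\<rho>)
  have P_le_r: "P u v \<le> r v" for u v
  proof -
    have "P u v \<le> measure \<rho> ((shift ^^ a) -` cylinder v)"
      unfolding P_def by (rule finite_measure_mono) (auto simp: s\<rho> preimage_borel)
    then show ?thesis using invariant_preimage[OF inv cyl_borel, of a v] by (simp add: r_def)
  qed
  have sumq: "sum q (words a) = 1" using cyl_sum1[OF bp] by (simp add: q_def)
  have sumr: "sum r (words b) = 1" using cyl_sum1[OF bp] by (simp add: r_def)
  have sumP: "(\<Sum>(u, v)\<in>S. P u v) = 1"
    using sumq margu by (simp add: S_def sum.cartesian_product[symmetric])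
  have sumqr: "(\<Sum>(u, v)\<in>S. q u * r v) = 1"
    using sumq sumr by (simp add: S_def sum.cartesian_product[symmetric] sum_distrib_left[symmetric]
        sum_distrib_right[symmetric])
  have g: "- (\<Sum>s\<in>S. (\<lambda>(u, v). P u v) s * ln ((\<lambda>(u, v). P u v) s))
      \<le> - (\<Sum>s\<in>S. (\<lambda>(u, v). P u v) s * ln ((\<lambda>(u, v). q u * r v) s))"
  proof (rule gibbs[OF finS])
    show "sum (\<lambda>(u, v). P u v) S = 1" by (rule sumP)
    show "sum (\<lambda>(u, v). q u * r v) S \<le> 1" using sumqr by simp
    fix s assume "s \<in> S"
    obtain u v where s: "s = (u, v)" by (cases s)
    show "0 \<le> (\<lambda>(u, v). P u v) s" using P_nonneg by (simp add: s)
    show "0 \<le> (\<lambda>(u, v). q u * r v) s" by (simp add: s q_def r_def)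
    assume "0 < (\<lambda>(u, v). P u v) s"
    then have "0 < P u v" by (simp add: s)
    then have "0 < q u" "0 < r v" using P_le_q[of u v] P_le_r[of u v] by linarith+
    then show "0 < (\<lambda>(u, v). q u * r v) s" by (simp add: s)
  qed
  have split: "P u v * ln (q u * r v) = P u v * ln (q u) + P u v * ln (r v)" for u v
  proof (cases "P u v = 0")
    case True then show ?thesis by simp
  next
    case False
    then have "0 < P u v" using P_nonneg[of u v] by simp
    then have "0 < q u" "0 < r v" using P_le_q[of u v] P_le_r[of u v] by linarith+
    then show ?thesis by (simp add: ln_mult distrib_left)
  qed
  have ru: "(\<Sum>(u, v)\<in>S. P u v * ln (q u)) = (\<Sum>u\<in>words a. q u * ln (q u))"
  proof -
    have "(\<Sum>(u, v)\<in>S. P u v * ln (q u)) = (\<Sum>u\<in>words a. \<Sum>v\<in>words b. P u v * ln (q u))"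
      by (simp add: S_def sum.cartesian_product[symmetric])
    also have "\<dots> = (\<Sum>u\<in>words a. q u * ln (q u))"
      by (simp add: sum_distrib_right[symmetric] margu)
    finally show ?thesis .
  qed
  have rv: "(\<Sum>(u, v)\<in>S. P u v * ln (r v)) = (\<Sum>v\<in>words b. r v * ln (r v))"
  proof -
    have "(\<Sum>(u, v)\<in>S. P u v * ln (r v)) = (\<Sum>u\<in>words a. \<Sum>v\<in>words b. P u v * ln (r v))"
      by (simp add: S_def sum.cartesian_product[symmetric])
    also have "\<dots> = (\<Sum>v\<in>words b. \<Sum>u\<in>words a. P u v * ln (r v))"
      by (rule sum.swap)
    also have "\<dots> = (\<Sum>v\<in>words b. r v * ln (r v))"
      by (simp add: sum_distrib_right[symmetric] margv)
    finally show ?thesis .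
  qed
  have "block_entropy \<rho> (a + b) \<le> - (\<Sum>(u, v)\<in>S. P u v * ln (q u * r v))"
    using h1 g by (simp add: case_prod_beta)
  also have "(\<Sum>(u, v)\<in>S. P u v * ln (q u * r v)) = (\<Sum>(u, v)\<in>S. P u v * ln (q u)) + (\<Sum>(u, v)\<in>S. P u v * ln (r v))"
    by (simp add: split case_prod_beta sum.distrib)
  also have "- (\<dots>) = block_entropy \<rho> a + block_entropy \<rho> b"
    unfolding ru rv by (simp add: block_entropy_def q_def r_def)
  finally show ?thesis .
qed



lemma open_basis_cyl:
  assumes "open (S :: (nat \<Rightarrow> 'a::topological_space) set)" "x \<in> S"
  shows "\<exists>k. cylinder (pre k x) \<subseteq> S"
proof -
  have "openin (product_topology (\<lambda>i. euclidean) UNIV) S"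
    using assms(1) by (simp add: open_fun_def)
  from product_topology_open_contains_basis[OF this assms(2)]
  obtain X where X: "x \<in> (\<Pi>\<^sub>E i\<in>UNIV. X i)" "finite {i. X i \<noteq> topspace (euclidean::'a topology)}"
     "(\<Pi>\<^sub>E i\<in>UNIV. X i) \<subseteq> S" by blast
  obtain k where k: "{i. X i \<noteq> UNIV} \<subseteq> {..<k}" using finite_nat_bounded X(2) by auto
  have "cylinder (pre k x) \<subseteq> (\<Pi>\<^sub>E i\<in>UNIV. X i)"
  proof
    fix y assume y: "y \<in> cylinder (pre k x)"
    have "y i \<in> X i" for i
    proof (cases "i < k")
      case True then show ?thesis using y X(1) by (auto simp: cylinder_pre)
    next
      case False then show ?thesis using k by auto
    qed
    then show "y \<in> (\<Pi>\<^sub>E i\<in>UNIV. X i)" by auto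
  qed
  then show ?thesis using X(3) by blast
qed

lemma sets_borel_cyl:
  "sets (borel :: (nat \<Rightarrow> 'a::{finite,discrete_topology}) measure) = sigma_sets UNIV (insert {} (range cylinder))"
proof -
  have cnt: "countable (range (cylinder :: 'a list \<Rightarrow> _))" by simp
  have tb: "topological_basis (range (cylinder :: 'a list \<Rightarrow> _))"
  proof -
    have opn: "\<And>B'. B' \<in> range (cylinder :: 'a list \<Rightarrow> _) \<Longrightarrow> open B'"
    proof -
      fix B' :: "(nat \<Rightarrow> 'a) set" assume "B' \<in> range cylinder"
      then obtain w where "B' = cylinder w" by blast
      then show "open B'" by (simp add: open_cylinder)
    qed
    have "\<forall>O'. open O' \<longrightarrow> (\<forall>x\<in>O'. \<exists>B'\<in>range (cylinder :: 'a list \<Rightarrow> _). x \<in> B' \<and> B' \<subseteq> O')"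
    proof (intro allI impI ballI)
      fix O' :: "(nat \<Rightarrow> 'a) set" and x assume "open O'" "x \<in> O'"
      then obtain k where "cylinder (pre k x) \<subseteq> O'" using open_basis_cyl by blast
      moreover have "x \<in> cylinder (pre k x)" by (simp add: cylinder_pre)
      ultimately show "\<exists>B'\<in>range cylinder. x \<in> B' \<and> B' \<subseteq> O'" by blast
    qed
    then show ?thesis using topological_basis_iff[OF opn] by blast
  qed
  have "sets (borel :: (nat \<Rightarrow> 'a) measure) = sets (sigma UNIV (range cylinder))"
    using borel_eq_countable_basis[OF cnt tb] by simp
  also have "\<dots> = sigma_sets UNIV (range cylinder)" by (rule sets_measure_of) simp
  also have "\<dots> = sigma_sets UNIV (insert {} (range cylinder))"
    by (rule sigma_sets_eqI) (auto intro: sigma_sets.Empty)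
  finally show ?thesis .
qed

lemma xlnx_bound:
  assumes "0 \<le> y" "y \<le> 1"
  shows "\<bar>y * ln y\<bar> \<le> 2 * sqrt y"
proof (cases "y = 0")
  case True then show ?thesis by simp
next
  case False
  then have y: "y > 0" using assms by simp
  define s where "s = sqrt y"
  have s: "s > 0" using y by (simp add: s_def)
  have ys: "y = s * s" using assms by (simp add: s_def)
  have lnle: "ln y \<le> 0" using assms y by simp
  have "ln (1/s) \<le> 1/s - 1" using s by (intro ln_le_minus_one) simp
  then have lns: "ln s \<ge> 1 - 1/s" using s by (simp add: ln_div)
  have "ln y = 2 * ln s" using s by (simp add: ys ln_mult)
  then have e1: "y * ln y = s * s * (2 * ln s)" using ys by simp
  have e2: "s * s * (2 * (1 - 1/s)) \<le> s * s * (2 * ln s)"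
    using lns s by (intro mult_left_mono) auto
  have e3: "s * s * (2 * (1 - 1/s)) = 2 * (s * s) - 2 * s" using s by (simp add: field_simps)
  have e4: "0 \<le> s * s" using s by simp
  have "y * ln y \<ge> - 2 * s" using e1 e2 e3 e4 by linarith
  moreover have "y * ln y \<le> 0" using lnle y by (simp add: mult_nonneg_nonpos less_imp_le)
  ultimately show ?thesis by (simp add: s_def)
qed

lemma xlnx_tendsto:
  fixes X :: "nat \<Rightarrow> real"
  assumes X: "X \<longlonglongrightarrow> x" and b: "\<And>k. 0 \<le> X k" "\<And>k. X k \<le> 1"
  shows "(\<lambda>k. X k * ln (X k)) \<longlonglongrightarrow> x * ln x"
proof (cases "x = 0")
  case False
  then show ?thesis by (intro tendsto_mult X tendsto_ln)
next
  case True
  have "(\<lambda>k. 2 * sqrt (X k)) \<longlonglongrightarrow> 2 * sqrt 0"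
    using X True by (intro tendsto_mult tendsto_const tendsto_real_sqrt) simp
  then have g0: "(\<lambda>k. 2 * sqrt (X k)) \<longlonglongrightarrow> 0" by simp
  have "(\<lambda>k. X k * ln (X k)) \<longlonglongrightarrow> 0"
  proof (rule Lim_null_comparison[OF _ g0])
    show "\<forall>\<^sub>F k in sequentially. norm (X k * ln (X k)) \<le> 2 * sqrt (X k)"
      using xlnx_bound[OF b] by (intro always_eventually allI) simp
  qed
  then show ?thesis using True by simp
qed

lemma integrable_cont:
  fixes f :: "(nat \<Rightarrow> 'a::{finite,discrete_topology}) \<Rightarrow> real"
  assumes bp: "borel_prob \<rho>" and f: "continuous_on UNIV f"
  shows "integrable \<rho> f"
proof -
  interpret prob_space \<rho> using borel_prob_facts[OF bp] by simp
  obtain B where B: "\<And>x. \<bar>f x\<bar> \<le> B" using bounded_cont[OF f] by blast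
  have m: "f \<in> borel_measurable \<rho>"
    by (subst measurable_cong_sets[OF borel_prob_facts(2)[OF bp] refl]) (rule borel_measurable_continuous_onI[OF f])
  show ?thesis by (rule integrable_const_bound[of f B]) (use B m in auto)
qed

lemma integral_shift_pow:
  fixes f :: "(nat \<Rightarrow> 'a::topological_space) \<Rightarrow> real"
  assumes inv: "\<rho> \<in> invariant_measures" and f: "f \<in> borel_measurable borel"
  shows "integral\<^sup>L \<rho> (\<lambda>x. f ((shift ^^ i) x)) = integral\<^sup>L \<rho> f"
  using f
proof (induction i arbitrary: f)
  case 0 then show ?case by simp
next
  case (Suc i)
  have bp: "borel_prob \<rho>" using inv unfolding invariant_measures_def by blast
  have d: "distr \<rho> borel shift = \<rho>" using inv unfolding invariant_measures_def by blast
  have s\<rho>: "sets \<rho> = sets borel" using bp by (simp add: borel_prob_def)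
  have ms: "shift \<in> measurable \<rho> borel"
    by (subst measurable_cong_sets[OF s\<rho> refl]) (rule measurable_shift)
  have g: "(\<lambda>x. f ((shift ^^ i) x)) \<in> borel_measurable borel"
    using Suc.prems measurable_shift_pow by (rule measurable_compose[rotated])
  have "integral\<^sup>L \<rho> (\<lambda>x. f ((shift ^^ Suc i) x)) = integral\<^sup>L \<rho> (\<lambda>x. (\<lambda>y. f ((shift ^^ i) y)) (shift x))"
    by (simp add: funpow_Suc_right del: funpow.simps)
  also have "\<dots> = integral\<^sup>L (distr \<rho> borel shift) (\<lambda>y. f ((shift ^^ i) y))"
    by (rule integral_distr[OF ms g, symmetric])
  also have "\<dots> = integral\<^sup>L \<rho> (\<lambda>y. f ((shift ^^ i) y))" by (simp only: d)
  also have "\<dots> = integral\<^sup>L \<rho> f" by (rule Suc.IH[OF Suc.prems])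
  finally show ?case .
qed



lemma gibbs_var:
  fixes \<phi> :: "(nat \<Rightarrow> 'a::{finite,discrete_topology}) \<Rightarrow> real"
  assumes bp: "borel_prob \<nu>"
  shows "block_entropy \<nu> n + (\<Sum>w\<in>words n. measure \<nu> (cylinder w) * U_word \<phi> w)
    \<le> block_entropy (Mn \<phi> n) n + (\<Sum>w\<in>words n. cw \<phi> n w * U_word \<phi> w)"
proof -
  interpret prob_space \<nu> using borel_prob_facts[OF bp] by simp
  define Z where "Z = partition_fn \<phi> n"
  have Z: "Z > 0" using partition_pos by (simp add: Z_def)
  have lncw: "ln (cw \<phi> n w) = U_word \<phi> w - ln Z" for w
    using Z by (simp add: cw_def Z_def ln_div)
  have s1: "(\<Sum>w\<in>words n. measure \<nu> (cylinder w)) = 1" by (rule cyl_sum1[OF bp])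
  have s2: "(\<Sum>w\<in>words n. cw \<phi> n w) = 1" by (rule cw_sum)
  have "block_entropy \<nu> n \<le> - (\<Sum>w\<in>words n. measure \<nu> (cylinder w) * ln (cw \<phi> n w))"
    unfolding block_entropy_def
  proof (rule gibbs)
    show "sum (cw \<phi> n) (words n) \<le> 1" using s2 by simp
    fix w :: "'a list" assume "w \<in> words n"
    show "0 \<le> cw \<phi> n w" using cw_pos[of \<phi> n w] by simp
    show "0 < cw \<phi> n w" by (rule cw_pos)
  qed (auto simp: s1)
  also have "- (\<Sum>w\<in>words n. measure \<nu> (cylinder w) * ln (cw \<phi> n w))
      = - (\<Sum>w\<in>words n. measure \<nu> (cylinder w) * U_word \<phi> w) + (\<Sum>w\<in>words n. measure \<nu> (cylinder w)) * ln Z"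
    by (simp add: lncw right_diff_distrib sum_subtractf sum_distrib_right)
  finally have A: "block_entropy \<nu> n + (\<Sum>w\<in>words n. measure \<nu> (cylinder w) * U_word \<phi> w) \<le> ln Z"
    using s1 by simp
  have "block_entropy (Mn \<phi> n) n = - (\<Sum>w\<in>words n. cw \<phi> n w * ln (cw \<phi> n w))"
    unfolding block_entropy_def by (intro arg_cong[where f = uminus] sum.cong refl) (simp add: measure_Mn_cylinder)
  also have "\<dots> = - (\<Sum>w\<in>words n. cw \<phi> n w * U_word \<phi> w) + (\<Sum>w\<in>words n. cw \<phi> n w) * ln Z"
    by (simp add: lncw right_diff_distrib sum_subtractf sum_distrib_right)
  finally have B: "block_entropy (Mn \<phi> n) n + (\<Sum>w\<in>words n. cw \<phi> n w * U_word \<phi> w) = ln Z"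
    using s2 by simp
  show ?thesis using A B by simp
qed

lemma integrable_pre:
  fixes \<rho> :: "(nat \<Rightarrow> 'a::{finite,discrete_topology}) measure" and g :: "'a list \<Rightarrow> real"
  assumes bp: "borel_prob \<rho>"
  shows "integrable \<rho> (\<lambda>x. g (pre n x))"
proof -
  interpret prob_space \<rho> using borel_prob_facts[OF bp] by simp
  have eq: "(\<lambda>x. g (pre n x)) = (\<lambda>x. \<Sum>w\<in>words n. g w * indicator (cylinder w) x)"
  proof
    fix x
    have "(\<Sum>w\<in>words n. g w * indicator (cylinder w) x) = (\<Sum>w\<in>words n. if w = pre n x then g w else 0)"
      by (intro sum.cong refl) (simp add: in_cyl_iff indicator_def)
    also have "\<dots> = g (pre n x)" by (simp add: sum.delta)
    finally show "g (pre n x) = (\<Sum>w\<in>words n. g w * indicator (cylinder w) x)" by simp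
  qed
  show ?thesis unfolding eq
  proof (rule Bochner_Integration.integrable_sum)
    fix w :: "'a list"
    have cs: "cylinder w \<in> sets \<rho>" using borel_prob_facts(2)[OF bp] by simp
    have "emeasure \<rho> (cylinder w) < \<infinity>" using emeasure_finite[of "cylinder w"] by (simp add: less_top[symmetric])
    then have "integrable \<rho> (indicat_real (cylinder w))" by (rule integrable_real_indicator[OF cs])
    then show "integrable \<rho> (\<lambda>x. g w * indicat_real (cylinder w) x)" by (rule integrable_mult_right)
  qed
qed

lemma continuous_shift_pow: "continuous_on UNIV (shift ^^ i :: (nat \<Rightarrow> 'a::topological_space) \<Rightarrow> _)"
  unfolding shift_pow_eq by (intro continuous_on_coordinatewise_then_product) simp

lemma card_tail_le: "card ({..<n} \<inter> {i. n < i + k}) \<le> (k::nat)"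
proof -
  have "{..<n} \<inter> {i. n < i + k} \<subseteq> {n - k..<n}" by auto
  then have "card ({..<n} \<inter> {i. n < i + k}) \<le> card {n - k..<n}" by (intro card_mono) auto
  also have "\<dots> \<le> k" by simp
  finally show ?thesis .
qed

lemma U_pointwise:
  fixes \<phi> :: "(nat \<Rightarrow> 'a) \<Rightarrow> real"
  assumes B: "\<And>x. \<bar>\<phi> x\<bar> \<le> B"
    and k: "\<And>x y. (\<forall>i<k. x i = y i) \<Longrightarrow> \<bar>\<phi> x - \<phi> y\<bar> < e"
    and n: "n > 0" and e: "e > 0"
  shows "(\<Sum>i<n. \<phi> ((shift ^^ i) x)) - (real n * e + 2 * B * real k) \<le> U_word \<phi> (pre n x)"
proof -
  define w where "w = pre n x"
  have lw: "length w = n" by (simp add: w_def)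
  have B0: "0 \<le> B" using B[of x] by simp
  have tm: "\<phi> ((shift ^^ i) x) - e - (if n < i + k then 2 * B else 0) \<le> \<phi> (periodic_pt (rotate i w))"
    if i: "i < n" for i
  proof (cases "n < i + k")
    case True
    then show ?thesis using B[of "(shift ^^ i) x"] B[of "periodic_pt (rotate i w)"] e by (simp add: abs_le_iff)
  next
    case False
    have "\<forall>j<k. periodic_pt (rotate i w) j = (shift ^^ i) x j"
    proof (intro allI impI)
      fix j assume "j < k"
      then have ij: "i + j < n" using False by simp
      have "periodic_pt (rotate i w) j = (shift ^^ i) (periodic_pt w) j"
        using pp_rotate[of w i] lw n by simp
      also have "\<dots> = w ! ((i + j) mod n)" by (simp add: shift_pow periodic_pt_def lw)
      also have "\<dots> = x (i + j)" using ij by (simp add: w_def pre_def)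
      finally show "periodic_pt (rotate i w) j = (shift ^^ i) x j" by (simp add: shift_pow)
    qed
    then have "\<bar>\<phi> (periodic_pt (rotate i w)) - \<phi> ((shift ^^ i) x)\<bar> < e" by (rule k)
    then show ?thesis using False by (simp add: abs_less_iff)
  qed
  have "(\<Sum>i<n. \<phi> ((shift ^^ i) x) - e - (if n < i + k then 2 * B else 0)) \<le> (\<Sum>i<n. \<phi> (periodic_pt (rotate i w)))"
    by (rule sum_mono) (rule tm, simp)
  moreover have "(\<Sum>i<n. \<phi> ((shift ^^ i) x) - e - (if n < i + k then 2 * B else 0))
      = (\<Sum>i<n. \<phi> ((shift ^^ i) x)) - real n * e - 2 * B * real (card ({..<n} \<inter> {i. n < i + k}))"
  proof -
    have "(\<Sum>i<n. (if n < i + k then 2 * B else 0)) = (\<Sum>i<n. 2 * B * of_bool (n < i + k))"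
      by (intro sum.cong) auto
    also have "\<dots> = 2 * B * real (card ({..<n} \<inter> {i. n < i + k}))"
      by (simp add: sum_distrib_left[symmetric])
    finally show ?thesis by (simp add: sum_subtractf)
  qed
  moreover have "2 * B * real (card ({..<n} \<inter> {i. n < i + k})) \<le> 2 * B * real k"
    using card_tail_le[of n k] B0 by (intro mult_left_mono) auto
  ultimately show ?thesis by (simp add: U_word_def phi_word_def w_def)
qed

lemma U_approx:
  fixes \<phi> :: "(nat \<Rightarrow> 'a::{finite,discrete_topology}) \<Rightarrow> real"
  assumes inv: "\<nu> \<in> invariant_measures" and cont: "continuous_on UNIV \<phi>"
    and B: "\<And>x. \<bar>\<phi> x\<bar> \<le> B"
    and k: "\<And>x y. (\<forall>i<k. x i = y i) \<Longrightarrow> \<bar>\<phi> x - \<phi> y\<bar> < e"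
    and n: "n > 0" and e: "e > 0"
  shows "real n * integral\<^sup>L \<nu> \<phi> - (real n * e + 2 * B * real k)
    \<le> (\<Sum>w\<in>words n. measure \<nu> (cylinder w) * U_word \<phi> w)"
proof -
  have bp: "borel_prob \<nu>" using inv unfolding invariant_measures_def by blast
  interpret prob_space \<nu> using borel_prob_facts[OF bp] by simp
  have mphi: "\<phi> \<in> borel_measurable borel" by (rule borel_measurable_continuous_onI[OF cont])
  have ci: "continuous_on UNIV (\<lambda>x. \<phi> ((shift ^^ i) x))" for i
    using continuous_on_compose[OF continuous_shift_pow[of i] continuous_on_subset[OF cont]] by (simp add: comp_def)
  have ii: "integrable \<nu> (\<lambda>x. \<phi> ((shift ^^ i) x))" for i by (rule integrable_cont[OF bp ci])
  have "real n * integral\<^sup>L \<nu> \<phi> = (\<Sum>i<n. integral\<^sup>L \<nu> (\<lambda>x. \<phi> ((shift ^^ i) x)))"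
    by (simp add: integral_shift_pow[OF inv mphi])
  also have "\<dots> = integral\<^sup>L \<nu> (\<lambda>x. \<Sum>i<n. \<phi> ((shift ^^ i) x))"
    by (rule Bochner_Integration.integral_sum[symmetric]) (rule ii)
  finally have e1: "real n * integral\<^sup>L \<nu> \<phi> = integral\<^sup>L \<nu> (\<lambda>x. \<Sum>i<n. \<phi> ((shift ^^ i) x))" .
  have "integral\<^sup>L \<nu> (\<lambda>x. (\<Sum>i<n. \<phi> ((shift ^^ i) x)) - (real n * e + 2 * B * real k))
      \<le> integral\<^sup>L \<nu> (\<lambda>x. U_word \<phi> (pre n x))"
  proof (rule integral_mono)
    show "integrable \<nu> (\<lambda>x. (\<Sum>i<n. \<phi> ((shift ^^ i) x)) - (real n * e + 2 * B * real k))"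
      by (intro Bochner_Integration.integrable_diff Bochner_Integration.integrable_sum ii integrable_const)
    show "integrable \<nu> (\<lambda>x. U_word \<phi> (pre n x))" by (rule integrable_pre[OF bp])
    fix x show "(\<Sum>i<n. \<phi> ((shift ^^ i) x)) - (real n * e + 2 * B * real k) \<le> U_word \<phi> (pre n x)"
      by (rule U_pointwise[OF B k n e])
  qed
  also have "integral\<^sup>L \<nu> (\<lambda>x. U_word \<phi> (pre n x)) = (\<Sum>w\<in>words n. measure \<nu> (cylinder w) * U_word \<phi> w)"
    by (simp add: integral_pre[OF bp] mult.commute)
  also have "integral\<^sup>L \<nu> (\<lambda>x. (\<Sum>i<n. \<phi> ((shift ^^ i) x)) - (real n * e + 2 * B * real k))
      = real n * integral\<^sup>L \<nu> \<phi> - (real n * e + 2 * B * real k)"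
    using e1 ii by (subst Bochner_Integration.integral_diff) (auto intro!: Bochner_Integration.integrable_sum simp: prob_space)
  finally show ?thesis .
qed



lemma ks_props:
  fixes \<rho> :: "(nat \<Rightarrow> 'a::{finite,discrete_topology}) measure"
  assumes inv: "\<rho> \<in> invariant_measures"
  shows "(\<lambda>n. block_entropy \<rho> n / real n) \<longlonglongrightarrow> ks_entropy \<rho>"
    and "\<And>m. m > 0 \<Longrightarrow> ks_entropy \<rho> \<le> block_entropy \<rho> m / real m"
proof -
  have bp: "borel_prob \<rho>" using inv unfolding invariant_measures_def by blast
  obtain L where L: "(\<lambda>n. block_entropy \<rho> n / real n) \<longlonglongrightarrow> L" "\<forall>m>0. L \<le> block_entropy \<rho> m / real m"
    using fekete[of "block_entropy \<rho>" "ln (real CARD('a))"] subadd_entropy[OF inv]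
      block_entropy_nonneg[OF bp] block_entropy_le[OF bp] by blast
  have "ks_entropy \<rho> = L" unfolding ks_entropy_def using L(1) by (rule limI)
  then show "(\<lambda>n. block_entropy \<rho> n / real n) \<longlonglongrightarrow> ks_entropy \<rho>"
    and "\<And>m. m > 0 \<Longrightarrow> ks_entropy \<rho> \<le> block_entropy \<rho> m / real m" using L by auto
qed

lemma ent_bound:
  fixes \<rho> :: "(nat \<Rightarrow> 'a::{finite,discrete_topology}) measure"
  assumes inv: "\<rho> \<in> invariant_measures" and "m > 0" "n > 0"
  shows "block_entropy \<rho> n / real n \<le> block_entropy \<rho> m / real m + real m * ln (real CARD('a)) / real n"
proof -
  have bp: "borel_prob \<rho>" using inv unfolding invariant_measures_def by blast
  show ?thesis
    using subadd_bound[of "block_entropy \<rho>" "ln (real CARD('a))" m n] subadd_entropy[OF inv]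
      block_entropy_nonneg[OF bp] block_entropy_le[OF bp] assms(2,3) by blast
qed

lemma cyl_Int:
  "cylinder v \<inter> cylinder w \<in> insert {} (range (cylinder :: 'a list \<Rightarrow> (nat \<Rightarrow> 'a) set))"
proof (cases "cylinder v \<inter> cylinder w = {}")
  case True then show ?thesis by simp
next
  case False
  then obtain x0 where x0: "x0 \<in> cylinder v" "x0 \<in> cylinder w" by blast
  have "cylinder v \<inter> cylinder w = cylinder (pre (max (length v) (length w)) x0)"
  proof (intro set_eqI iffI)
    fix y assume y: "y \<in> cylinder v \<inter> cylinder w"
    have "y i = x0 i" if "i < max (length v) (length w)" for i
    proof (cases "i < length v")
      case True then show ?thesis using x0 y by (auto simp: cylinder_def)
    next
      case False then have "i < length w" using that by simp
      then show ?thesis using x0 y by (auto simp: cylinder_def)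
    qed
    then show "y \<in> cylinder (pre (max (length v) (length w)) x0)" by (simp add: cylinder_pre)
  next
    fix y assume "y \<in> cylinder (pre (max (length v) (length w)) x0)"
    then have "\<forall>i<max (length v) (length w). y i = x0 i" by (simp add: cylinder_pre)
    then show "y \<in> cylinder v \<inter> cylinder w" using x0 by (auto simp: cylinder_def)
  qed
  then show ?thesis by simp
qed

lemma Int_stable_cyl: "Int_stable (insert {} (range (cylinder :: 'a list \<Rightarrow> (nat \<Rightarrow> 'a) set)))"
  unfolding Int_stable_def using cyl_Int by auto

lemma div_helper:
  fixes n hv I e D Hn J :: real
  assumes "n > 0" "n * hv + n * I - n * e - D \<le> Hn + n * J"
  shows "hv + I - e - D / n \<le> Hn / n + J"
proof -
  have "(n * hv + n * I - n * e - D) / n \<le> (Hn + n * J) / n"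
    using assms by (intro divide_right_mono) auto
  also have "(n * hv + n * I - n * e - D) / n = hv + I - e - D / n"
    using assms(1) by (simp add: diff_divide_distrib add_divide_distrib)
  also have "(Hn + n * J) / n = Hn / n + J"
    using assms(1) by (simp add: add_divide_distrib)
  finally show ?thesis .
qed

theorem mainTheorem2:
  fixes \<phi> :: "(nat \<Rightarrow> 'a::{finite, discrete_topology}) \<Rightarrow> real"
    and \<mu> :: "(nat \<Rightarrow> 'a) measure"
  assumes "continuous_on UNIV \<phi>"
    and "borel_prob \<mu>"
    and "weak_limit_point (\<lambda>k. mu_n \<phi> (Suc k)) \<mu>"
  shows "equilibrium_state \<phi> \<mu>"
proof -
  note cont = assms(1) and bp\<mu> = assms(2)
  obtain r where r: "strict_mono r" and wc: "weak_conv ((\<lambda>k. mu_n \<phi> (Suc k)) \<circ> r) \<mu>"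
    using assms(3) unfolding weak_limit_point_def by blast
  define M where "M j = Mn \<phi> (Suc (r j))" for j
  have conv: "(\<lambda>j. integral\<^sup>L (M j) f) \<longlonglongrightarrow> integral\<^sup>L \<mu> f" if "continuous_on UNIV f" for f :: "(nat \<Rightarrow> 'a) \<Rightarrow> real"
    using wc that unfolding weak_conv_def by (simp add: M_def mu_n_eq comp_def)
  have Minv: "M j \<in> invariant_measures" for j unfolding M_def by (rule Mn_invariant) simp
  have Mbp: "borel_prob (M j)" for j using Minv[of j] unfolding invariant_measures_def by blast
  have sp\<mu>: "space \<mu> = UNIV" and s\<mu>: "sets \<mu> = sets borel" using borel_prob_facts[OF bp\<mu>] by auto
  interpret P\<mu>: prob_space \<mu> using borel_prob_facts[OF bp\<mu>] by simp
  have cylconv: "(\<lambda>j. measure (M j) (cylinder w)) \<longlonglongrightarrow> measure \<mu> (cylinder w)" for w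
    using conv[OF continuous_indicator_cylinder[of w]] borel_prob_facts(3)[OF Mbp] sp\<mu>
    by (simp add: Bochner_Integration.integral_indicator)
  have pre_eq: "measure \<mu> (shift -` cylinder w) = measure \<mu> (cylinder w)" for w :: "'a list"
  proof -
    have c2: "continuous_on UNIV (\<lambda>x. indicat_real (cylinder w) (shift x))"
      using continuous_on_compose[OF continuous_shift continuous_on_subset[OF continuous_indicator_cylinder[of w]]]
      by (simp add: comp_def)
    have ind: "(\<lambda>x. indicat_real (cylinder w) (shift x)) = indicator (shift -` cylinder w)"
      by (auto simp: indicator_def)
    have "(\<lambda>j. measure (M j) (shift -` cylinder w)) \<longlonglongrightarrow> measure \<mu> (shift -` cylinder w)"
      using conv[OF c2] borel_prob_facts(3)[OF Mbp] sp\<mu>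
      by (simp add: ind Bochner_Integration.integral_indicator)
    moreover have "measure (M j) (shift -` cylinder w) = measure (M j) (cylinder w)" for j
      using invariant_preimage[OF Minv[of j] cyl_borel[of w], of 1] by simp
    ultimately have "(\<lambda>j. measure (M j) (cylinder w)) \<longlonglongrightarrow> measure \<mu> (shift -` cylinder w)" by simp
    then show ?thesis using cylconv[of w] by (rule LIMSEQ_unique)
  qed
  have ms: "shift \<in> measurable \<mu> borel"
    by (subst measurable_cong_sets[OF s\<mu> refl]) (rule measurable_shift)
  have "distr \<mu> borel shift = \<mu>"
  proof (rule measure_eqI_generator_eq[where \<Omega> = UNIV and E = "insert {} (range cylinder)" and A = "\<lambda>_. UNIV"])
    show "Int_stable (insert {} (range (cylinder :: 'a list \<Rightarrow> _)))" by (rule Int_stable_cyl)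
    show "insert {} (range cylinder) \<subseteq> Pow UNIV" by simp
    show "sets (distr \<mu> borel shift) = sigma_sets UNIV (insert {} (range cylinder))"
      by (simp add: sets_borel_cyl)
    show "sets \<mu> = sigma_sets UNIV (insert {} (range cylinder))"
      by (simp add: s\<mu> sets_borel_cyl)
    show "range (\<lambda>_. UNIV) \<subseteq> insert {} (range (cylinder :: 'a list \<Rightarrow> _))"
    proof -
      have "cylinder ([] :: 'a list) = UNIV" by (simp add: cylinder_def)
      then have "UNIV \<in> range (cylinder :: 'a list \<Rightarrow> _)" by (metis rangeI)
      then show ?thesis by blast
    qed
    show "(\<Union>i::nat. UNIV) = (UNIV :: (nat \<Rightarrow> 'a) set)" by simp
    show "emeasure (distr \<mu> borel shift) UNIV \<noteq> \<infinity>" for i :: nat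
      using ms by (simp add: emeasure_distr sp\<mu>)
    fix X assume "X \<in> insert {} (range (cylinder :: 'a list \<Rightarrow> _))"
    then consider "X = {}" | w where "X = cylinder w" by blast
    then show "emeasure (distr \<mu> borel shift) X = emeasure \<mu> X"
    proof cases
      case 1 then show ?thesis by simp
    next
      case 2
      have "emeasure (distr \<mu> borel shift) X = emeasure \<mu> (shift -` cylinder w)"
        using ms 2 by (simp add: emeasure_distr sp\<mu>)
      also have "\<dots> = ennreal (measure \<mu> (shift -` cylinder w))"
        by (rule P\<mu>.emeasure_eq_measure)
      also have "\<dots> = ennreal (measure \<mu> (cylinder w))" by (simp add: pre_eq)
      also have "\<dots> = emeasure \<mu> X" using 2 by (simp add: P\<mu>.emeasure_eq_measure)
      finally show ?thesis .
    qed
  qed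
  then have inv\<mu>: "\<mu> \<in> invariant_measures" using bp\<mu> by (simp add: invariant_measures_def)
  define c where "c = ln (real CARD('a))"
  obtain B where B: "\<And>x. \<bar>\<phi> x\<bar> \<le> B" using bounded_cont[OF cont] by blast
  have mphi: "\<phi> \<in> borel_measurable borel" by (rule borel_measurable_continuous_onI[OF cont])
  have inv_n: "(\<lambda>j. inverse (real (Suc (r j)))) \<longlonglongrightarrow> 0"
    using LIMSEQ_subseq_LIMSEQ[OF LIMSEQ_inverse_real_of_nat r] by (simp add: comp_def)
  have entconv: "(\<lambda>j. block_entropy (M j) m) \<longlonglongrightarrow> block_entropy \<mu> m" for m
    unfolding block_entropy_def
  proof (intro tendsto_minus tendsto_sum)
    fix w :: "'a list"
    show "(\<lambda>j. measure (M j) (cylinder w) * ln (measure (M j) (cylinder w)))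
        \<longlonglongrightarrow> measure \<mu> (cylinder w) * ln (measure \<mu> (cylinder w))"
    proof (rule xlnx_tendsto[OF cylconv])
      fix j
      interpret prob_space "M j" using borel_prob_facts[OF Mbp] by simp
      show "0 \<le> measure (M j) (cylinder w)" by simp
      show "measure (M j) (cylinder w) \<le> 1" by simp
    qed
  qed
  have main: "ks_entropy \<nu> + integral\<^sup>L \<nu> \<phi> \<le> ks_entropy \<mu> + integral\<^sup>L \<mu> \<phi>"
    if inv\<nu>: "\<nu> \<in> invariant_measures" for \<nu>
  proof (rule field_le_epsilon)
    fix e :: real assume e: "e > 0"
    obtain k where k: "\<And>x y. (\<forall>i<k. x i = y i) \<Longrightarrow> \<bar>\<phi> x - \<phi> y\<bar> < e"
      using unif_cont[OF cont e] by blast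
    have bp\<nu>: "borel_prob \<nu>" using inv\<nu> unfolding invariant_measures_def by blast
    have step: "ks_entropy \<nu> + integral\<^sup>L \<nu> \<phi> - e \<le> block_entropy \<mu> m / real m + integral\<^sup>L \<mu> \<phi>"
      if m: "m > 0" for m
    proof -
      define L where "L j = ks_entropy \<nu> + integral\<^sup>L \<nu> \<phi> - e - (2 * B * real k) / real (Suc (r j))" for j
      define R where "R j = block_entropy (M j) m / real m + real m * c / real (Suc (r j)) + integral\<^sup>L (M j) \<phi>" for j
      have LR: "L j \<le> R j" for j
      proof -
        define n where "n = Suc (r j)"
        have n: "n > 0" by (simp add: n_def)
        have a1: "real n * ks_entropy \<nu> \<le> block_entropy \<nu> n"
          using ks_props(2)[OF inv\<nu> n] n by (simp add: field_simps)
        have a2: "real n * integral\<^sup>L \<nu> \<phi> - (real n * e + 2 * B * real k)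
            \<le> (\<Sum>w\<in>words n. measure \<nu> (cylinder w) * U_word \<phi> w)"
          by (rule U_approx[OF inv\<nu> cont B k n e])
        have a3: "block_entropy \<nu> n + (\<Sum>w\<in>words n. measure \<nu> (cylinder w) * U_word \<phi> w)
            \<le> block_entropy (M j) n + real n * integral\<^sup>L (M j) \<phi>"
          using gibbs_var[OF bp\<nu>, of n \<phi>] integral_U_Mn[OF n mphi] by (simp add: M_def n_def)
        have "real n * ks_entropy \<nu> + real n * integral\<^sup>L \<nu> \<phi> - real n * e - 2 * B * real k
            \<le> block_entropy (M j) n + real n * integral\<^sup>L (M j) \<phi>"
          using a1 a2 a3 by linarith
        then have a4: "ks_entropy \<nu> + integral\<^sup>L \<nu> \<phi> - e - 2 * B * real k / real n
            \<le> block_entropy (M j) n / real n + integral\<^sup>L (M j) \<phi>"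
          using n by (intro div_helper) auto
        have a5: "block_entropy (M j) n / real n \<le> block_entropy (M j) m / real m + real m * c / real n"
          unfolding c_def by (rule ent_bound[OF Minv m n])
        show ?thesis using a4 a5 by (simp add: L_def R_def n_def)
      qed
      have Lc: "L \<longlonglongrightarrow> ks_entropy \<nu> + integral\<^sup>L \<nu> \<phi> - e - 0"
        unfolding L_def using inv_n
        by (intro tendsto_diff tendsto_const) (simp add: divide_inverse tendsto_mult_right_zero)
      have Rc: "R \<longlonglongrightarrow> block_entropy \<mu> m / real m + 0 + integral\<^sup>L \<mu> \<phi>"
        unfolding R_def using inv_n m
        by (intro tendsto_add tendsto_divide entconv tendsto_const conv cont)
           (simp_all add: divide_inverse tendsto_mult_right_zero)
      have "ks_entropy \<nu> + integral\<^sup>L \<nu> \<phi> - e - 0 \<le> block_entropy \<mu> m / real m + 0 + integral\<^sup>L \<mu> \<phi>"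
        by (rule tendsto_le[OF _ Rc Lc]) (simp, rule always_eventually, rule allI, rule LR)
      then show ?thesis by simp
    qed
    have "(\<lambda>m. block_entropy \<mu> m / real m + integral\<^sup>L \<mu> \<phi>) \<longlonglongrightarrow> ks_entropy \<mu> + integral\<^sup>L \<mu> \<phi>"
      by (intro tendsto_add ks_props(1)[OF inv\<mu>] tendsto_const)
    then have "ks_entropy \<nu> + integral\<^sup>L \<nu> \<phi> - e \<le> ks_entropy \<mu> + integral\<^sup>L \<mu> \<phi>"
    proof (rule LIMSEQ_le_const)
      show "\<exists>N. \<forall>n\<ge>N. ks_entropy \<nu> + integral\<^sup>L \<nu> \<phi> - e \<le> block_entropy \<mu> n / real n + integral\<^sup>L \<mu> \<phi>"
      proof (intro exI[of _ 1] allI impI)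
        fix n :: nat assume "1 \<le> n" then show "ks_entropy \<nu> + integral\<^sup>L \<nu> \<phi> - e \<le> block_entropy \<mu> n / real n + integral\<^sup>L \<mu> \<phi>"
          by (intro step) simp
      qed
    qed
    then show "ks_entropy \<nu> + integral\<^sup>L \<nu> \<phi> \<le> ks_entropy \<mu> + integral\<^sup>L \<mu> \<phi> + e" by simp
  qed
  have "(SUP \<nu>\<in>invariant_measures. ks_entropy \<nu> + integral\<^sup>L \<nu> \<phi>) = ks_entropy \<mu> + integral\<^sup>L \<mu> \<phi>"
    using inv\<mu> main by (intro cSup_eq_maximum) auto
  then show ?thesis unfolding equilibrium_state_def using inv\<mu> by simp
qed


end
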